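(* Let $n\in\mathbb{N}_0$ and for $z,w\in\mathbb{C}$ with $z\neq w$ define $$H_n(z,w)=\frac{|z|^{2n}}{|z-w|^{2n}}e^{-\pi(|z|^2-|z-w|^2)}.$$ Let $R>0$, $w=R/2$, and $z=re^{i\varphi}$ with $r\ge R$ and $|\varphi|\le\pi/5$. Then $$H_n(z,w)\le 4^n e^{-\pi R^2/2}.$$
   Context: For $n=0$ the factor $|z|^{2n}/|z-w|^{2n}$ equals $1$. *)

theory Defs
  imports "HOL-Analysis.Analysis"
begin

definition H :: "nat \<Rightarrow> complex \<Rightarrow> complex \<Rightarrow> real" where
  "H n z w = (cmod z) ^ (2*n) / (cmod (z - w)) ^ (2*n)
             * exp (- pi * ((cmod z)^2 - (cmod (z - w))^2))"

end

theory Submission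
  imports Defs
begin

lemma cos_lb: "\<bar>x\<bar> \<le> pi / 5 \<Longrightarrow> cos x \<ge> 3/4"
proof -
  assume a: "\<bar>x\<bar> \<le> pi / 5"
  have c: "cos x = 1 - 2 * sin (x/2) ^ 2" using cos_double_sin[of "x/2"] by simp
  have s: "\<bar>sin (x/2)\<bar> \<le> \<bar>x/2\<bar>" by (rule abs_sin_x_le_abs_x)
  have "sin (x/2) ^ 2 \<le> (x/2)^2"
    using s by (metis abs_ge_zero power2_abs power_mono)
  also have "(x/2)^2 \<le> (pi/10)^2"
  proof -
    have "\<bar>x/2\<bar> \<le> pi/10" using a by simp
    hence "\<bar>x/2\<bar>^2 \<le> (pi/10)^2" by (intro power_mono) auto
    thus ?thesis by (metis power2_abs)
  qed
  also have "(pi/10)^2 \<le> (3.2/10)^2" using pi_approx(2)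
    by (intro power_mono) auto
  finally have "sin (x/2) ^ 2 \<le> (3.2/10)^2" .
  moreover have "((3.2::real)/10)^2 \<le> 1/9" by (simp add: power2_eq_square)
  ultimately have "sin (x/2) ^ 2 \<le> 1/9" by linarith
  thus ?thesis using c by linarith
qed

theorem lemma2:
  fixes n :: nat and R r \<phi> :: real and z w :: complex
  assumes "R > 0"
    and "w = complex_of_real (R / 2)"
    and "z = complex_of_real r * exp (\<i> * complex_of_real \<phi>)"
    and "r \<ge> R"
    and "\<bar>\<phi>\<bar> \<le> pi / 5"
  shows "H n z w \<le> 4 ^ n * exp (- pi * R^2 / 2)"
proof -
  define c where "c = cos \<phi>"
  define s where "s = sin \<phi>"
  have c34: "c \<ge> 3/4" using cos_lb[OF assms(5)] c_def by simp
  have c1: "c \<le> 1" using c_def by simp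
  have cs: "c^2 + s^2 = 1" using c_def s_def by simp
  have zeq: "Re z = r*c \<and> Im z = r * s"
    using assms(3) by (simp add: c_def s_def exp_Euler cos_of_real sin_of_real)
  have zw: "Re (z - w) = r*c - R/2 \<and> Im (z - w) = r * s" using zeq unfolding assms(2) by simp
  define A where "A = (cmod z)^2"
  define B where "B = (cmod (z - w))^2"
  have e1: "(r*c)^2 + (r * s)^2 = r^2 * (c^2 + s^2)" by (simp add: power_mult_distrib algebra_simps)
  have A: "A = r^2" unfolding A_def cmod_power2 using zeq e1 cs by simp
  have e2: "(r*c - R/2)^2 + (r * s)^2 = r^2 * (c^2 + s^2) - r*R*c + R^2/4"
    by (simp add: power2_eq_square algebra_simps)
  have B: "B = r^2 - r*R*c + R^2/4" unfolding B_def cmod_power2 using zw e2 cs by simp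
  have r0: "r > 0" using assms by simp
  have rRc: "r*R*c \<le> r*R" using c1 r0 assms(1) by simp
  have "(3*r - R)*(r - R) \<ge> 0" using assms by (intro mult_nonneg_nonneg) auto
  hence AB4: "A \<le> 4*B" using A B rRc by (simp add: algebra_simps power2_eq_square)
  have "r^2 > 0" using r0 by simp
  hence Bpos: "B > 0" using AB4 A by linarith
  have "r*R*c \<ge> r*R*(3/4)" using c34 r0 assms(1) by simp
  moreover have "r*R \<ge> R*R" using assms by (simp add: mult_right_mono)
  ultimately have diff: "A - B \<ge> R^2/2" using A B by (simp add: power2_eq_square)
  have H: "H n z w = (A/B)^n * exp (- pi * (A - B))"
    unfolding H_def A_def B_def by (simp add: power_mult power_divide)
  have "(A/B)^n \<le> 4^n" using AB4 Bpos A
    by (intro power_mono) (auto simp: field_simps)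
  moreover have "exp (- pi * (A - B)) \<le> exp (- pi * R^2 / 2)"
    using diff by simp
  ultimately show ?thesis unfolding H
    by (intro mult_mono) (auto simp: A Bpos)
qed

end
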